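(* Let $E_1$ and $E_2$ be vector lattices with the countable sup property. Consider $E_1\times E_2$ with either the coordinatewise order ($(x_1,y_1)\le(x_2,y_2)$ iff $x_1\le x_2$ and $y_1\le y_2$) or the lexicographic order ($(x_1,y_1)\preceq(x_2,y_2)$ iff $x_1<x_2$, or $x_1=x_2$ and $y_1\le y_2$). With respect to either order, $E_1\times E_2$ has the countable sup property, in the sense that whenever $(z_\alpha)$ is an increasing net with $0\le z_\alpha\uparrow z$ (i.e. $z$ is the supremum of the net), there is an increasing sequence of indices $(\alpha_n)$ with $0\le z_{\alpha_n}\uparrow z$.
   Context: A vector lattice $E$ has the countable sup property if for every net with $0\le x_\alpha\uparrow x$ in $E$ there is an increasing sequence of indices $\alpha_n$ with $0\le x_{\alpha_n}\uparrow x$ (equivalently, every nonempty subset possessing a supremum contains a countable subset with the same supremum). *)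

theory Defs
  imports Complex_Main "HOL-Library.Countable_Set"
begin

text \<open>A vector lattice (Riesz space) is an ordered real vector space whose order is a lattice.
  We use the type class combination \<open>{ordered_real_vector, lattice}\<close>.\<close>

definition is_sup_rel :: "('b \<Rightarrow> 'b \<Rightarrow> bool) \<Rightarrow> 'b set \<Rightarrow> 'b \<Rightarrow> bool" where
  "is_sup_rel le S s \<longleftrightarrow> (\<forall>x\<in>S. le x s) \<and> (\<forall>u. (\<forall>x\<in>S. le x u) \<longrightarrow> le s u)"

definition directed_set :: "'i set \<Rightarrow> ('i \<Rightarrow> 'i \<Rightarrow> bool) \<Rightarrow> bool" where
  "directed_set I R \<longleftrightarrow> I \<noteq> {} \<and> (\<forall>a\<in>I. R a a) \<and>
     (\<forall>a\<in>I. \<forall>b\<in>I. \<forall>c\<in>I. R a b \<longrightarrow> R b c \<longrightarrow> R a c) \<and>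
     (\<forall>a\<in>I. \<forall>b\<in>I. \<exists>c\<in>I. R a c \<and> R b c)"

definition csp_nets :: "'i itself \<Rightarrow> ('b \<Rightarrow> 'b \<Rightarrow> bool) \<Rightarrow> 'b \<Rightarrow> bool" where
  "csp_nets _ le z0 \<longleftrightarrow>
     (\<forall>(I::'i set) R (x::'i \<Rightarrow> 'b) s.
        directed_set I R \<and>
        (\<forall>a\<in>I. \<forall>b\<in>I. R a b \<longrightarrow> le (x a) (x b)) \<and>
        (\<forall>a\<in>I. le z0 (x a)) \<and>
        is_sup_rel le (x ` I) s
        \<longrightarrow> (\<exists>\<alpha>::nat \<Rightarrow> 'i. (\<forall>n. \<alpha> n \<in> I) \<and> (\<forall>n. R (\<alpha> n) (\<alpha> (Suc n))) \<and>
               (\<forall>n. le z0 (x (\<alpha> n))) \<and> (\<forall>n. le (x (\<alpha> n)) (x (\<alpha> (Suc n)))) \<and>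
               is_sup_rel le (range (x \<circ> \<alpha>)) s))"

text \<open>Countable sup property, set version (the equivalent formulation given in the context):
  every nonempty subset possessing a supremum contains a countable subset with the same
  supremum. Used for the hypotheses on \<open>E\<^sub>1, E\<^sub>2\<close>.\<close>
definition csp_sets :: "('b \<Rightarrow> 'b \<Rightarrow> bool) \<Rightarrow> bool" where
  "csp_sets le \<longleftrightarrow>
     (\<forall>S s. S \<noteq> {} \<and> is_sup_rel le S s \<longrightarrow> (\<exists>C\<subseteq>S. countable C \<and> is_sup_rel le C s))"

definition coord_le :: "('a::order \<times> 'b::order) \<Rightarrow> ('a \<times> 'b) \<Rightarrow> bool" where
  "coord_le p q \<longleftrightarrow> fst p \<le> fst q \<and> snd p \<le> snd q"

definition lex_le :: "('a::order \<times> 'b::order) \<Rightarrow> ('a \<times> 'b) \<Rightarrow> bool" where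
  "lex_le p q \<longleftrightarrow> fst p < fst q \<or> (fst p = fst q \<and> snd p \<le> snd q)"

end

theory Submission
  imports Defs
begin

lemma chain_seq:
  assumes d: "directed_set I R" and a: "\<forall>n. a n \<in> I" and b: "\<forall>n. b n \<in> I"
  shows "\<exists>\<alpha>. (\<forall>n. \<alpha> n \<in> I) \<and> (\<forall>n. R (\<alpha> n) (\<alpha> (Suc n))) \<and> (\<forall>n. R (a n) (\<alpha> n) \<and> R (b n) (\<alpha> n))"
proof -
  have up3: "\<forall>p q r. \<exists>c. (p\<in>I \<and> q\<in>I \<and> r\<in>I) \<longrightarrow> c\<in>I \<and> R p c \<and> R q c \<and> R r c"
  proof (intro allI)
    fix p q r
    show "\<exists>c. (p\<in>I \<and> q\<in>I \<and> r\<in>I) \<longrightarrow> c\<in>I \<and> R p c \<and> R q c \<and> R r c"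
    proof (cases "p\<in>I \<and> q\<in>I \<and> r\<in>I")
      case True
      then obtain c1 where c1: "c1\<in>I" "R p c1" "R q c1" using d unfolding directed_set_def by blast
      then obtain c2 where c2: "c2\<in>I" "R c1 c2" "R r c2" using d True unfolding directed_set_def by blast
      have "R p c2" "R q c2" using d c1 c2 True unfolding directed_set_def by blast+
      then show ?thesis using c2 by blast
    qed auto
  qed
  define F where "F p q r = (SOME c. (p\<in>I \<and> q\<in>I \<and> r\<in>I) \<longrightarrow> c\<in>I \<and> R p c \<and> R q c \<and> R r c)" for p q r
  have F: "F p q r \<in> I \<and> R p (F p q r) \<and> R q (F p q r) \<and> R r (F p q r)" if "p\<in>I" "q\<in>I" "r\<in>I" for p q r
    using someI_ex[OF up3[rule_format, of p q r]] that unfolding F_def by blast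
  define \<alpha> where "\<alpha> = rec_nat (F (a 0) (b 0) (a 0)) (\<lambda>n p. F p (a (Suc n)) (b (Suc n)))"
  have a0: "\<alpha> 0 = F (a 0) (b 0) (a 0)" and aS: "\<And>n. \<alpha> (Suc n) = F (\<alpha> n) (a (Suc n)) (b (Suc n))"
    by (simp_all add: \<alpha>_def)
  have I: "\<alpha> n \<in> I" for n
  proof (induction n)
    case 0
    show ?case unfolding a0 using F[OF a[rule_format] b[rule_format] a[rule_format]] by blast
  next
    case (Suc n)
    show ?case unfolding aS using F[OF Suc a[rule_format] b[rule_format]] by blast
  qed
  have ab: "R (a n) (\<alpha> n) \<and> R (b n) (\<alpha> n)" for n
  proof (cases n)
    case 0
    show ?thesis unfolding 0 a0 using F[OF a[rule_format] b[rule_format] a[rule_format]] by blast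
  next
    case (Suc m)
    show ?thesis unfolding Suc aS using F[OF I a[rule_format] b[rule_format]] by blast
  qed
  have st: "R (\<alpha> n) (\<alpha> (Suc n))" for n
    unfolding aS using F[OF I a[rule_format] b[rule_format]] by blast
  show ?thesis using I ab st by blast
qed

lemma get_seq:
  assumes "countable C" "C \<subseteq> g ` I" "I \<noteq> {}"
  shows "\<exists>a::nat \<Rightarrow> _. (\<forall>n. a n \<in> I) \<and> C \<subseteq> range (g \<circ> a)"
proof (cases "C = {}")
  case True
  obtain i where "i \<in> I" using assms(3) by blast
  then show ?thesis using True by (intro exI[of _ "\<lambda>_. i"]) simp
next
  case False
  have ex: "\<exists>i. i \<in> I \<and> g i = from_nat_into C n" for n
  proof -
    have "from_nat_into C n \<in> C" by (rule from_nat_into[OF False])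
    then have "from_nat_into C n \<in> g ` I" by (rule subsetD[OF assms(2)])
    then obtain i where "i \<in> I" "from_nat_into C n = g i" by (rule imageE)
    then show ?thesis by auto
  qed
  define a where "a n = (SOME i. i \<in> I \<and> g i = from_nat_into C n)" for n
  have a: "a n \<in> I \<and> g (a n) = from_nat_into C n" for n
    unfolding a_def by (rule someI_ex[OF ex])
  have Cs: "C \<subseteq> range (g \<circ> a)"
  proof
    fix c assume "c \<in> C"
    then obtain n where "c = from_nat_into C n"
      using range_from_nat_into[OF False assms(1)] by blast
    then show "c \<in> range (g \<circ> a)" using a[of n] by (metis comp_apply rangeI)
  qed
  have aI: "\<forall>n. a n \<in> I" using a by simp
  show ?thesis by (rule exI[of _ a], rule conjI[OF aI Cs])
qed

lemma coord_part:
  assumes A1: "csp_sets ((\<le>) :: 'a::{ordered_real_vector, lattice} \<Rightarrow> 'a \<Rightarrow> bool)"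
    and A2: "csp_sets ((\<le>) :: 'b::{ordered_real_vector, lattice} \<Rightarrow> 'b \<Rightarrow> bool)"
  shows "csp_nets TYPE('i) (coord_le :: 'a \<times> 'b \<Rightarrow> 'a \<times> 'b \<Rightarrow> bool) (0, 0)"
  unfolding csp_nets_def
proof (intro allI impI, elim conjE)
  fix I :: "'i set" and R and x :: "'i \<Rightarrow> 'a \<times> 'b" and s
  assume d: "directed_set I R" and mono: "\<forall>a\<in>I. \<forall>b\<in>I. R a b \<longrightarrow> coord_le (x a) (x b)"
    and pos: "\<forall>a\<in>I. coord_le (0,0) (x a)" and sup: "is_sup_rel coord_le (x ` I) s"
  have Ine: "I \<noteq> {}" using d unfolding directed_set_def by auto
  have s1: "is_sup_rel (\<le>) (fst ` x ` I) (fst s)"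
    unfolding is_sup_rel_def
  proof (intro conjI ballI allI impI)
    fix y assume "y \<in> fst ` x ` I" then show "y \<le> fst s" using sup unfolding is_sup_rel_def coord_le_def by auto
  next
    fix u assume ub: "\<forall>y\<in>fst ` x ` I. y \<le> u"
    have "\<forall>y\<in>x`I. coord_le y (u, snd s)" using ub sup unfolding is_sup_rel_def coord_le_def by auto
    then show "fst s \<le> u" using sup unfolding is_sup_rel_def coord_le_def by fastforce
  qed
  have s2: "is_sup_rel (\<le>) (snd ` x ` I) (snd s)"
    unfolding is_sup_rel_def
  proof (intro conjI ballI allI impI)
    fix y assume "y \<in> snd ` x ` I" then show "y \<le> snd s" using sup unfolding is_sup_rel_def coord_le_def by auto
  next
    fix u assume ub: "\<forall>y\<in>snd ` x ` I. y \<le> u"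
    have "\<forall>y\<in>x`I. coord_le y (fst s, u)" using ub sup unfolding is_sup_rel_def coord_le_def by auto
    then show "snd s \<le> u" using sup unfolding is_sup_rel_def coord_le_def by fastforce
  qed
  obtain C1 where C1: "C1 \<subseteq> fst`x`I" "countable C1" "is_sup_rel (\<le>) C1 (fst s)"
    using A1[unfolded csp_sets_def, rule_format, of "fst`x`I" "fst s"] s1 Ine by blast
  obtain C2 where C2: "C2 \<subseteq> snd`x`I" "countable C2" "is_sup_rel (\<le>) C2 (snd s)"
    using A2[unfolded csp_sets_def, rule_format, of "snd`x`I" "snd s"] s2 Ine by blast
  obtain a :: "nat \<Rightarrow> 'i" where a: "\<forall>n. a n \<in> I" "C1 \<subseteq> range ((fst\<circ>x)\<circ>a)"
    using get_seq[of C1 "fst\<circ>x" I] C1 Ine by (auto simp: image_comp)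
  obtain b :: "nat \<Rightarrow> 'i" where b: "\<forall>n. b n \<in> I" "C2 \<subseteq> range ((snd\<circ>x)\<circ>b)"
    using get_seq[of C2 "snd\<circ>x" I] C2 Ine by (auto simp: image_comp)
  obtain \<alpha> where al: "\<forall>n. \<alpha> n \<in> I" "\<forall>n. R (\<alpha> n) (\<alpha> (Suc n))" "\<forall>n. R (a n) (\<alpha> n) \<and> R (b n) (\<alpha> n)"
    using chain_seq[OF d a(1) b(1)] by blast
  have ub: "is_sup_rel coord_le (range (x \<circ> \<alpha>)) s"
    unfolding is_sup_rel_def
  proof (intro conjI ballI allI impI)
    fix y assume "y \<in> range (x \<circ> \<alpha>)" then show "coord_le y s" using sup al(1) unfolding is_sup_rel_def by auto
  next
    fix u assume u: "\<forall>y\<in>range (x \<circ> \<alpha>). coord_le y u"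
    have "\<forall>c\<in>C1. c \<le> fst u"
    proof
      fix c assume "c \<in> C1"
      then obtain n where "c = fst (x (a n))" using a(2) by auto
      moreover have "coord_le (x (a n)) (x (\<alpha> n))" using mono a(1) al by blast
      moreover have "coord_le (x (\<alpha> n)) u" using u by auto
      ultimately show "c \<le> fst u" unfolding coord_le_def by (meson order_trans)
    qed
    then have f: "fst s \<le> fst u" using C1(3) unfolding is_sup_rel_def by blast
    have "\<forall>c\<in>C2. c \<le> snd u"
    proof
      fix c assume "c \<in> C2"
      then obtain n where "c = snd (x (b n))" using b(2) by auto
      moreover have "coord_le (x (b n)) (x (\<alpha> n))" using mono b(1) al by blast
      moreover have "coord_le (x (\<alpha> n)) u" using u by auto
      ultimately show "c \<le> snd u" unfolding coord_le_def by (meson order_trans)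
    qed
    then have "snd s \<le> snd u" using C2(3) unfolding is_sup_rel_def by blast
    then show "coord_le s u" using f unfolding coord_le_def by simp
  qed
  show "\<exists>\<alpha>::nat \<Rightarrow> 'i. (\<forall>n. \<alpha> n \<in> I) \<and> (\<forall>n. R (\<alpha> n) (\<alpha> (Suc n))) \<and>
               (\<forall>n. coord_le (0,0) (x (\<alpha> n))) \<and> (\<forall>n. coord_le (x (\<alpha> n)) (x (\<alpha> (Suc n)))) \<and>
               is_sup_rel coord_le (range (x \<circ> \<alpha>)) s"
    using al pos mono ub by blast
qed

lemma lex_fst: "lex_le p q \<Longrightarrow> fst p \<le> fst q"
  unfolding lex_le_def by auto

lemma midpoint_lt:
  fixes w t :: "'a::ordered_real_vector"
  assumes "w < t"
  shows "\<exists>m. w < m \<and> m < t"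
proof -
  define d where "d = t - w"
  define h where "h = (1/2::real) *\<^sub>R d"
  have d0: "0 \<le> d" "d \<noteq> 0" using assms unfolding d_def by auto
  have h0: "0 \<le> h" unfolding h_def using d0 by (simp add: scaleR_nonneg_nonneg)
  have hne: "h \<noteq> 0" unfolding h_def using d0 by simp
  have hh: "h + h = d" unfolding h_def by (simp flip: scaleR_left_distrib)
  have "w + h = t - h" using hh unfolding d_def by (simp add: algebra_simps)
  moreover have "w < w + h" using h0 hne by (simp add: order_le_neq_trans)
  moreover have "t - h < t" using h0 hne by (simp add: order_le_neq_trans)
  ultimately show ?thesis by metis
qed

lemma lex_part:
  assumes A1: "csp_sets ((\<le>) :: 'a::{ordered_real_vector, lattice} \<Rightarrow> 'a \<Rightarrow> bool)"
    and A2: "csp_sets ((\<le>) :: 'b::{ordered_real_vector, lattice} \<Rightarrow> 'b \<Rightarrow> bool)"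
  shows "csp_nets TYPE('i) (lex_le :: 'a \<times> 'b \<Rightarrow> 'a \<times> 'b \<Rightarrow> bool) (0, 0)"
  unfolding csp_nets_def
proof (intro allI impI, elim conjE)
  fix I :: "'i set" and R and x :: "'i \<Rightarrow> 'a \<times> 'b" and s
  assume d: "directed_set I R" and mono: "\<forall>a\<in>I. \<forall>b\<in>I. R a b \<longrightarrow> lex_le (x a) (x b)"
    and pos: "\<forall>a\<in>I. lex_le (0,0) (x a)" and sup: "is_sup_rel lex_le (x ` I) s"
  have Ine: "I \<noteq> {}" using d unfolding directed_set_def by auto
  have ubs: "lex_le (x i) s" if "i \<in> I" for i using sup that unfolding is_sup_rel_def by auto
  have least: "lex_le s u" if "\<forall>i\<in>I. lex_le (x i) u" for u
  proof -
    have "\<forall>y\<in>x`I. lex_le y u" using that by blast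
    then show ?thesis using sup unfolding is_sup_rel_def by blast
  qed
  have fle: "fst (x i) \<le> fst s" if "i \<in> I" for i using lex_fst[OF ubs[OF that]] .
  show "\<exists>\<alpha>::nat \<Rightarrow> 'i. (\<forall>n. \<alpha> n \<in> I) \<and> (\<forall>n. R (\<alpha> n) (\<alpha> (Suc n))) \<and>
               (\<forall>n. lex_le (0,0) (x (\<alpha> n))) \<and> (\<forall>n. lex_le (x (\<alpha> n)) (x (\<alpha> (Suc n)))) \<and>
               is_sup_rel lex_le (range (x \<circ> \<alpha>)) s"
  proof (cases "\<exists>i\<in>I. fst (x i) = fst s")
    case True
    then obtain i0 where i0: "i0 \<in> I" "fst (x i0) = fst s" by blast
    define T where "T = {i\<in>I. fst (x i) = fst s}"
    have TI: "T \<subseteq> I" and Tne: "T \<noteq> {}" using i0 unfolding T_def by auto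
    have stay: "fst (x j) = fst s" if "i \<in> I" "j \<in> I" "R i j" "fst (x i) = fst s" for i j
    proof -
      have "fst (x i) \<le> fst (x j)" using lex_fst mono that by blast
      then show ?thesis using fle[OF that(2)] that(4) by simp
    qed
    have sT: "is_sup_rel (\<le>) (snd ` x ` T) (snd s)"
      unfolding is_sup_rel_def
    proof (intro conjI ballI allI impI)
      fix y assume "y \<in> snd ` x ` T"
      then obtain i where "i \<in> T" "y = snd (x i)" by auto
      then show "y \<le> snd s" using ubs[of i] unfolding T_def lex_le_def by auto
    next
      fix u assume ub: "\<forall>y\<in>snd ` x ` T. y \<le> u"
      have "\<forall>i\<in>I. lex_le (x i) (fst s, u)"
      proof
        fix i assume iI: "i \<in> I"
        show "lex_le (x i) (fst s, u)"
        proof (cases "fst (x i) = fst s")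
          case True
          then have "i \<in> T" using iI unfolding T_def by auto
          then show ?thesis using ub True unfolding lex_le_def by auto
        next
          case False
          then show ?thesis using fle[OF iI] unfolding lex_le_def by auto
        qed
      qed
      then show "snd s \<le> u" using least unfolding lex_le_def by fastforce
    qed
    obtain C where C: "C \<subseteq> snd`x`T" "countable C" "is_sup_rel (\<le>) C (snd s)"
      using A2[unfolded csp_sets_def, rule_format, of "snd`x`T" "snd s"] sT Tne by blast
    obtain a :: "nat \<Rightarrow> 'i" where a: "\<forall>n. a n \<in> T" "C \<subseteq> range ((snd\<circ>x)\<circ>a)"
      using get_seq[of C "snd\<circ>x" T] C Tne by (auto simp: image_comp)
    have aI: "\<forall>n. a n \<in> I" using a(1) TI by auto
    have i0I: "\<forall>n. (\<lambda>_. i0) n \<in> I" using i0 by simp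
    obtain \<alpha> where al: "\<forall>n. \<alpha> n \<in> I" "\<forall>n. R (\<alpha> n) (\<alpha> (Suc n))" "\<forall>n. R (a n) (\<alpha> n) \<and> R ((\<lambda>_. i0) n) (\<alpha> n)"
      using chain_seq[OF d aI i0I] by blast
    have aT: "fst (x (a n)) = fst s" for n using a(1) unfolding T_def by auto
    have fa: "fst (x (\<alpha> n)) = fst s" for n using stay[OF aI[rule_format] al(1)[rule_format], of n n] al(3) aT by blast
    have ub: "is_sup_rel lex_le (range (x \<circ> \<alpha>)) s"
      unfolding is_sup_rel_def
    proof (intro conjI ballI allI impI)
      fix y assume "y \<in> range (x \<circ> \<alpha>)" then show "lex_le y s" using ubs al(1) by auto
    next
      fix u assume u: "\<forall>y\<in>range (x \<circ> \<alpha>). lex_le y u"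
      have un: "lex_le (x (\<alpha> n)) u" for n using u by auto
      show "lex_le s u"
      proof (cases "fst s < fst u")
        case True then show ?thesis unfolding lex_le_def by simp
      next
        case False
        have eq: "fst u = fst s" using un[of 0] fa[of 0] False unfolding lex_le_def by auto
        have sn: "snd (x (\<alpha> n)) \<le> snd u" for n using un[of n] fa[of n] eq unfolding lex_le_def by auto
        have "\<forall>c\<in>C. c \<le> snd u"
        proof
          fix c assume "c \<in> C"
          then obtain n where cn: "c = snd (x (a n))" using a(2) by auto
          have "lex_le (x (a n)) (x (\<alpha> n))" using mono aI al by blast
          then have "snd (x (a n)) \<le> snd (x (\<alpha> n))" using aT[of n] fa[of n] unfolding lex_le_def by auto
          then show "c \<le> snd u" using sn[of n] cn by (meson order_trans)
        qed
        then have "snd s \<le> snd u" using C(3) unfolding is_sup_rel_def by blast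
        then show ?thesis using eq unfolding lex_le_def by simp
      qed
    qed
    show ?thesis using al pos mono ub by blast
  next
    case False
    have flt: "fst (x i) < fst s" if "i \<in> I" for i using fle[OF that] False that by (simp add: order_le_neq_trans)
    have s1: "is_sup_rel (\<le>) (fst ` x ` I) (fst s)"
      unfolding is_sup_rel_def
    proof (intro conjI ballI allI impI)
      fix y assume "y \<in> fst ` x ` I" then show "y \<le> fst s" using fle by auto
    next
      fix u assume ub: "\<forall>y\<in>fst ` x ` I. y \<le> u"
      show "fst s \<le> u"
      proof (rule ccontr)
        assume nle: "\<not> fst s \<le> u"
        define w where "w = inf u (fst s)"
        have "w \<le> fst s" unfolding w_def by simp
        moreover have "w \<noteq> fst s" using nle unfolding w_def by (metis inf.absorb_iff2)
        ultimately have "w < fst s" by simp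
        then obtain m where m: "w < m" "m < fst s" using midpoint_lt by blast
        have "\<forall>i\<in>I. lex_le (x i) (m, 0)"
        proof
          fix i assume iI: "i \<in> I"
          have "fst (x i) \<le> w" unfolding w_def using ub iI fle[OF iI] by simp
          then show "lex_le (x i) (m, 0)" using m unfolding lex_le_def by (simp add: le_less_trans)
        qed
        from lex_fst[OF least[OF this]] have "fst s \<le> m" by simp
        then show False using m by simp
      qed
    qed
    obtain C where C: "C \<subseteq> fst`x`I" "countable C" "is_sup_rel (\<le>) C (fst s)"
      using A1[unfolded csp_sets_def, rule_format, of "fst`x`I" "fst s"] s1 Ine by blast
    obtain a :: "nat \<Rightarrow> 'i" where a: "\<forall>n. a n \<in> I" "C \<subseteq> range ((fst\<circ>x)\<circ>a)"
      using get_seq[of C "fst\<circ>x" I] C Ine by (auto simp: image_comp)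
    obtain \<alpha> where al: "\<forall>n. \<alpha> n \<in> I" "\<forall>n. R (\<alpha> n) (\<alpha> (Suc n))" "\<forall>n. R (a n) (\<alpha> n) \<and> R (a n) (\<alpha> n)"
      using chain_seq[OF d a(1) a(1)] by blast
    have ub: "is_sup_rel lex_le (range (x \<circ> \<alpha>)) s"
      unfolding is_sup_rel_def
    proof (intro conjI ballI allI impI)
      fix y assume "y \<in> range (x \<circ> \<alpha>)" then show "lex_le y s" using ubs al(1) by auto
    next
      fix u assume u: "\<forall>y\<in>range (x \<circ> \<alpha>). lex_le y u"
      have un: "lex_le (x (\<alpha> n)) u" for n using u by auto
      have "\<forall>c\<in>C. c \<le> fst u"
      proof
        fix c assume "c \<in> C"
        then obtain n where cn: "c = fst (x (a n))" using a(2) by auto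
        have "lex_le (x (a n)) (x (\<alpha> n))" using mono a(1) al by blast
        then have "fst (x (a n)) \<le> fst (x (\<alpha> n))" by (rule lex_fst)
        then show "c \<le> fst u" using lex_fst[OF un[of n]] cn by (meson order_trans)
      qed
      then have fsu: "fst s \<le> fst u" using C(3) unfolding is_sup_rel_def by blast
      have "\<forall>i\<in>I. lex_le (x i) (fst s, snd u)" using flt unfolding lex_le_def by auto
      then have "lex_le s (fst s, snd u)" by (rule least)
      then have "snd s \<le> snd u" unfolding lex_le_def by simp
      then show "lex_le s u" using fsu unfolding lex_le_def by (auto simp: le_less)
    qed
    show ?thesis using al pos mono ub by blast
  qed
qed

theorem proposition6p1:
  fixes E1 :: "'a::{ordered_real_vector, lattice} itself"
    and E2 :: "'b::{ordered_real_vector, lattice} itself"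
  assumes "csp_sets ((\<le>) :: 'a \<Rightarrow> 'a \<Rightarrow> bool)"
    and "csp_sets ((\<le>) :: 'b \<Rightarrow> 'b \<Rightarrow> bool)"
  shows "csp_nets TYPE('i) (coord_le :: 'a \<times> 'b \<Rightarrow> 'a \<times> 'b \<Rightarrow> bool) (0, 0)
       \<and> csp_nets TYPE('i) (lex_le :: 'a \<times> 'b \<Rightarrow> 'a \<times> 'b \<Rightarrow> bool) (0, 0)"
  using coord_part[OF assms] lex_part[OF assms] by blast

end
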